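(* Assume $\mathbf{P.0}$ has an optimal solution, with optimal value $OPT$. Let $A^g$ be the output of the greedy algorithm on the family $\mathcal{I}$. Then $|A^g|\le b$, $\lfloor\alpha_t\rfloor\le |A^g\cap V_t|\le\lceil\beta_t\rceil$ for all $t\in[m]$, and $$f(A^g)\ge \frac{(1-1/e)^2}{2}\,OPT.$$
   Context: Let $V$ be a finite set of $n$ items and $f:2^V\to\mathbb{R}_{\ge 0}$ a non-negative monotone submodular function. Items are divided into pairwise disjoint groups $V_1,\dots,V_m$ with $V=V_1\cup\dots\cup V_m$; $\alpha,\beta\in\mathbb{R}_{\ge 0}^m$ and $b$ is a positive integer. Let $\mathcal{F}=\{S\subseteq V: |S|\le b\}$. Problem $\mathbf{P.0}$: maximize $\sum_{S\in\mathcal{F}} x_S f(S)$ over $x\in[0,1]^{\mathcal{F}}$ subject to $\alpha_t\le \sum_{S\in\mathcal{F}} x_S |S\cap V_t|\le \beta_t$ for all $t\in[m]$ and $\sum_{S\in\mathcal{F}}x_S\le 1$; $OPT$ denotes its optimal value. Let $\mathcal{I}$ be the family of sets $S\subseteq V$ such that $|S\cap V_t|\le\lceil\beta_t\rceil$ for all $t\in[m]$ and $\sum_{t\in[m]}\max\{\lfloor\alpha_t\rfloor,|S\cap V_t|\}\le b$ (this family is the set of feasible solutions of problem $\mathbf{P.3}$: maximize $f(S)$ over $S\in\mathcal{I}$). The greedy algorithm on $\mathcal{I}$: start with $S=\emptyset$; while there exists $e\in V\setminus S$ with $S\cup\{e\}\in\mathcal{I}$, add to $S$ such an $e$ maximizing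 $f(S\cup\{e\})-f(S)$ (ties broken arbitrarily); when no such $e$ exists, output $A^g=S$. *)

theory Defs
  imports Complex_Main
begin

definition monotone_set_fun :: "'a set \<Rightarrow> ('a set \<Rightarrow> real) \<Rightarrow> bool" where
  "monotone_set_fun V f \<longleftrightarrow> (\<forall>A B. A \<subseteq> B \<and> B \<subseteq> V \<longrightarrow> f A \<le> f B)"

definition submodular :: "'a set \<Rightarrow> ('a set \<Rightarrow> real) \<Rightarrow> bool" where
  "submodular V f \<longleftrightarrow> (\<forall>A B. A \<subseteq> V \<and> B \<subseteq> V \<longrightarrow> f (A \<union> B) + f (A \<inter> B) \<le> f A + f B)"

text \<open>Groups are indexed by t in {0..<m} (i.e. [m] shifted to start at 0).\<close>

definition famF :: "'a set \<Rightarrow> nat \<Rightarrow> 'a set set" where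
  "famF V b = {S. S \<subseteq> V \<and> card S \<le> b}"

definition lp_feasible ::
  "'a set \<Rightarrow> nat \<Rightarrow> (nat \<Rightarrow> 'a set) \<Rightarrow> (nat \<Rightarrow> real) \<Rightarrow> (nat \<Rightarrow> real) \<Rightarrow> nat
   \<Rightarrow> ('a set \<Rightarrow> real) \<Rightarrow> bool" where
  "lp_feasible V m Vg \<alpha> \<beta> b x \<longleftrightarrow>
     (\<forall>S\<in>famF V b. 0 \<le> x S \<and> x S \<le> 1) \<and>
     (\<forall>t<m. \<alpha> t \<le> (\<Sum>S\<in>famF V b. x S * real (card (S \<inter> Vg t))) \<and>
            (\<Sum>S\<in>famF V b. x S * real (card (S \<inter> Vg t))) \<le> \<beta> t) \<and>
     (\<Sum>S\<in>famF V b. x S) \<le> 1"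

definition lp_obj :: "'a set \<Rightarrow> nat \<Rightarrow> ('a set \<Rightarrow> real) \<Rightarrow> ('a set \<Rightarrow> real) \<Rightarrow> real" where
  "lp_obj V b f x = (\<Sum>S\<in>famF V b. x S * f S)"

definition famI ::
  "'a set \<Rightarrow> nat \<Rightarrow> (nat \<Rightarrow> 'a set) \<Rightarrow> (nat \<Rightarrow> real) \<Rightarrow> (nat \<Rightarrow> real) \<Rightarrow> nat \<Rightarrow> 'a set set" where
  "famI V m Vg \<alpha> \<beta> b = {S. S \<subseteq> V \<and>
     (\<forall>t<m. card (S \<inter> Vg t) \<le> nat \<lceil>\<beta> t\<rceil>) \<and>
     (\<Sum>t<m. max (nat \<lfloor>\<alpha> t\<rfloor>) (card (S \<inter> Vg t))) \<le> b}"

inductive greedy_reach :: "'a set \<Rightarrow> 'a set set \<Rightarrow> ('a set \<Rightarrow> real) \<Rightarrow> 'a set \<Rightarrow> bool"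
  for V :: "'a set" and \<I> :: "'a set set" and f :: "'a set \<Rightarrow> real" where
  start: "greedy_reach V \<I> f {}"
| step: "\<lbrakk> greedy_reach V \<I> f S; e \<in> V - S; insert e S \<in> \<I>;
           \<forall>e'\<in>V - S. insert e' S \<in> \<I> \<longrightarrow> f (insert e' S) - f S \<le> f (insert e S) - f S \<rbrakk>
          \<Longrightarrow> greedy_reach V \<I> f (insert e S)"

definition greedy_output :: "'a set \<Rightarrow> 'a set set \<Rightarrow> ('a set \<Rightarrow> real) \<Rightarrow> 'a set \<Rightarrow> bool" where
  "greedy_output V \<I> f A \<longleftrightarrow> greedy_reach V \<I> f A \<and> \<not> (\<exists>e\<in>V - A. insert e A \<in> \<I>)"

end

theory Submission
  imports Defs
begin


definition blocked :: "'a set \<Rightarrow> 'a set set \<Rightarrow> 'a set \<Rightarrow> 'a set" where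
  "blocked V I S = {e \<in> V - S. insert e S \<notin> I}"

lemma greedy_inv:
  fixes f :: "'a set \<Rightarrow> real" and y :: "'a \<Rightarrow> real"
  assumes finV: "finite V"
  and down: "\<And>S T. S \<in> I \<Longrightarrow> T \<subseteq> S \<Longrightarrow> T \<in> I"
  and emp: "{} \<in> I"
  and mono: "\<And>A B. A \<subseteq> B \<Longrightarrow> B \<subseteq> V \<Longrightarrow> f A \<le> f B"
  and dr: "\<And>S T e. S \<subseteq> T \<Longrightarrow> T \<subseteq> V \<Longrightarrow> e \<in> V \<Longrightarrow> f (insert e T) - f T \<le> f (insert e S) - f S"
  and ynn: "\<And>e. e\<in>V \<Longrightarrow> 0 \<le> y e"
  and blk: "\<And>A. A\<in>I \<Longrightarrow> A \<subseteq> V \<Longrightarrow> sum y (blocked V I A) \<le> real (card A)"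
  and reach: "greedy_reach V I f S"
  shows "S \<in> I \<and> S \<subseteq> V \<and> (\<forall>h. 0 \<le> h \<longrightarrow> (h \<le> 0 \<or> (\<exists>e\<in>V-S. insert e S \<in> I \<and> h \<le> f (insert e S) - f S)) \<longrightarrow>
     (\<Sum>e\<in>blocked V I S. y e * (f (insert e S) - f S)) + (real (card S) - sum y (blocked V I S)) * h \<le> f S - f {})"
  using reach
proof induction
  case start
  have fin: "finite (blocked V I {})" using finV unfolding blocked_def by auto
  have "sum y (blocked V I {}) \<le> 0" using blk[OF emp] by simp
  moreover have nn: "\<forall>e\<in>blocked V I {}. 0 \<le> y e" using ynn unfolding blocked_def by auto
  ultimately have "sum y (blocked V I {}) = 0" using sum_nonneg[of "blocked V I {}" y] by force
  hence z: "\<forall>e\<in>blocked V I {}. y e = 0" using sum_nonneg_eq_0_iff[OF fin] nn by blast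
  hence "(\<Sum>e\<in>blocked V I {}. y e * (f (insert e {}) - f {})) = 0" by simp
  then show ?case using emp \<open>sum y (blocked V I {}) = 0\<close> by simp
next
  case (step S a)
  let ?S' = "insert a S"
  let ?B = "blocked V I S" and ?B' = "blocked V I ?S'"
  let ?d = "\<lambda>T e. f (insert e T) - f T"
  define g where "g = ?d S a"
  have SI: "S \<in> I" and SV: "S \<subseteq> V" using step by auto
  have aV: "a \<in> V" "a \<notin> S" using step by auto
  have S'I: "?S' \<in> I" and S'V: "?S' \<subseteq> V" using step SV by auto
  have finS: "finite S" using SV finV finite_subset by blast
  have g0: "0 \<le> g" unfolding g_def using mono[of S ?S'] S'V by auto
  have IH: "(\<Sum>e\<in>?B. y e * ?d S e) + (real (card S) - sum y ?B) * g \<le> f S - f {}"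
    using step.IH g0 step.hyps aV unfolding g_def by blast
  have BB: "?B \<subseteq> ?B'"
  proof
    fix e assume e: "e \<in> ?B"
    hence "e \<noteq> a" using step.hyps unfolding blocked_def by auto
    moreover have "insert e ?S' \<notin> I" using e down[of "insert e ?S'" "insert e S"] unfolding blocked_def by auto
    ultimately show "e \<in> ?B'" using e unfolding blocked_def by auto
  qed
  define N where "N = ?B' - ?B"
  have finB': "finite ?B'" using finV unfolding blocked_def by auto
  have finB: "finite ?B" using finV unfolding blocked_def by auto
  have finN: "finite N" using finB' unfolding N_def by auto
  have BN: "?B' = ?B \<union> N" "?B \<inter> N = {}" using BB unfolding N_def by auto
  have Ng: "\<And>e. e \<in> N \<Longrightarrow> ?d ?S' e \<le> g"
  proof -
    fix e assume e: "e \<in> N"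
    hence eV: "e \<in> V - S" "insert e S \<in> I" unfolding N_def blocked_def by auto
    have "?d S e \<le> g" using step.hyps(4) eV unfolding g_def by blast
    moreover have "?d ?S' e \<le> ?d S e" using dr[of S ?S' e] S'V eV by auto
    ultimately show "?d ?S' e \<le> g" by linarith
  qed
  have Bd: "\<And>e. e \<in> ?B \<Longrightarrow> ?d ?S' e \<le> ?d S e"
    using dr S'V unfolding blocked_def by blast
  have s1: "(\<Sum>e\<in>?B'. y e * ?d ?S' e) = (\<Sum>e\<in>?B. y e * ?d ?S' e) + (\<Sum>e\<in>N. y e * ?d ?S' e)"
    using BN finB finN by (simp add: sum.union_disjoint)
  have s2: "(\<Sum>e\<in>?B. y e * ?d ?S' e) \<le> (\<Sum>e\<in>?B. y e * ?d S e)"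
    apply (rule sum_mono) using Bd ynn unfolding blocked_def by (auto intro: mult_left_mono)
  have s3: "(\<Sum>e\<in>N. y e * ?d ?S' e) \<le> (\<Sum>e\<in>N. y e * g)"
    apply (rule sum_mono) using Ng ynn unfolding N_def blocked_def by (auto intro: mult_left_mono)
  have s4: "(\<Sum>e\<in>N. y e * g) = sum y N * g" by (simp add: sum_distrib_right)
  have yB': "sum y ?B' = sum y ?B + sum y N" using BN finB finN by (simp add: sum.union_disjoint)
  have blk': "sum y ?B' \<le> real (card ?S')" using blk[OF S'I S'V] .
  have cS': "real (card ?S') = real (card S) + 1" using finS aV by simp
  have fS': "f ?S' = f S + g" unfolding g_def by simp
  show ?case
  proof (intro conjI allI impI)
    show "?S' \<in> I" "?S' \<subseteq> V" using S'I S'V by auto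
    fix h assume h0: "0 \<le> h" and hc: "h \<le> 0 \<or> (\<exists>e\<in>V - ?S'. insert e ?S' \<in> I \<and> h \<le> ?d ?S' e)"
    have hg: "h \<le> g"
      using hc
    proof
      assume "h \<le> 0" thus ?thesis using g0 by linarith
    next
      assume "\<exists>e\<in>V - ?S'. insert e ?S' \<in> I \<and> h \<le> ?d ?S' e"
      then obtain e where e: "e \<in> V - ?S'" "insert e ?S' \<in> I" "h \<le> ?d ?S' e" by blast
      have "insert e S \<in> I" using down[OF e(2)] by auto
      hence "?d S e \<le> g" using step.hyps(4) e unfolding g_def by blast
      moreover have "?d ?S' e \<le> ?d S e" using dr[of S ?S' e] S'V e by auto
      ultimately show ?thesis using e by linarith
    qed
    have pr: "(g - h) * (sum y ?B' - real (card ?S')) \<le> 0"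
      using hg blk' by (intro mult_nonneg_nonpos) auto
    have "(\<Sum>e\<in>?B'. y e * ?d ?S' e) + (real (card ?S') - sum y ?B') * h
       \<le> (\<Sum>e\<in>?B. y e * ?d S e) + sum y N * g + (real (card S) + 1 - sum y ?B - sum y N) * h"
    proof -
      have "(real (card ?S') - sum y ?B') * h = (real (card S) + 1 - sum y ?B - sum y N) * h"
        using yB' cS' by simp
      thus ?thesis using s1 s2 s3 s4 by linarith
    qed
    also have "\<dots> = (\<Sum>e\<in>?B. y e * ?d S e) + (real (card S) - sum y ?B) * g + g
        + (g - h) * (sum y ?B' - real (card ?S'))"
      using yB' cS' by (simp add: algebra_simps)
    also have "\<dots> \<le> f S - f {} + g" using IH pr by linarith
    finally show "(\<Sum>e\<in>?B'. y e * ?d ?S' e) + (real (card ?S') - sum y ?B') * h \<le> f ?S' - f {}"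
      using fS' by linarith
  qed
qed


locale gsetup =
  fixes V :: "'a set" and f :: "'a set \<Rightarrow> real" and m :: nat and Vg :: "nat \<Rightarrow> 'a set"
    and \<alpha> \<beta> :: "nat \<Rightarrow> real" and b :: nat and xopt :: "'a set \<Rightarrow> real"
  assumes finV: "finite V"
    and f_nonneg: "\<forall>S\<subseteq>V. 0 \<le> f S"
    and f_mono: "monotone_set_fun V f"
    and f_submod: "submodular V f"
    and groups_disj: "\<forall>s<m. \<forall>t<m. s \<noteq> t \<longrightarrow> Vg s \<inter> Vg t = {}"
    and groups_cover: "(\<Union>t<m. Vg t) = V"
    and alpha_nonneg: "\<forall>t<m. 0 \<le> \<alpha> t"
    and beta_nonneg: "\<forall>t<m. 0 \<le> \<beta> t"
    and opt_feas: "lp_feasible V m Vg \<alpha> \<beta> b xopt"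
begin

abbreviation "F \<equiv> famF V b"
abbreviation "I \<equiv> famI V m Vg \<alpha> \<beta> b"
definition "y e = (\<Sum>S\<in>F. xopt S * (if e \<in> S then 1 else 0))"
definition "l t = nat \<lfloor>\<alpha> t\<rfloor>"
definition "u t = nat \<lceil>\<beta> t\<rceil>"

lemma finF: "finite F"
proof -
  have "F \<subseteq> Pow V" unfolding famF_def by auto
  thus ?thesis using finV finite_subset by blast
qed

lemma xnn: "S \<in> F \<Longrightarrow> 0 \<le> xopt S" using opt_feas unfolding lp_feasible_def by auto

lemma xsum: "(\<Sum>S\<in>F. xopt S) \<le> 1" using opt_feas unfolding lp_feasible_def by auto

lemma ysum: assumes "W \<subseteq> V" shows "sum y W = (\<Sum>S\<in>F. xopt S * real (card (S \<inter> W)))"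
proof -
  have fW: "finite W" using assms finV finite_subset by blast
  have "sum y W = (\<Sum>S\<in>F. \<Sum>e\<in>W. xopt S * (if e \<in> S then 1 else 0))"
    unfolding y_def by (rule sum.swap)
  also have "\<dots> = (\<Sum>S\<in>F. xopt S * (\<Sum>e\<in>W. (if e \<in> S then 1 else 0)))"
    by (simp add: sum_distrib_left)
  also have "\<dots> = (\<Sum>S\<in>F. xopt S * real (card (S \<inter> W)))"
  proof (rule sum.cong)
    fix S
    have "(\<Sum>e\<in>W. (if e \<in> S then 1 else 0)) = (\<Sum>e\<in>W \<inter> S. (1::real))"
      using sum.inter_restrict[OF fW, of "\<lambda>_. (1::real)" S] by simp
    also have "\<dots> = real (card (S \<inter> W))" by (simp add: Int_commute)
    finally show "xopt S * (\<Sum>e\<in>W. (if e \<in> S then 1 else 0)) = xopt S * real (card (S \<inter> W))" by simp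
  qed simp
  finally show ?thesis .
qed

lemma ynn: "0 \<le> y e" unfolding y_def using xnn by (auto intro!: sum_nonneg)

lemma Vg_sub: "t < m \<Longrightarrow> Vg t \<subseteq> V" using groups_cover by auto
lemma finVg: "t < m \<Longrightarrow> finite (Vg t)" using Vg_sub finV finite_subset by blast

lemma yV: "sum y V \<le> real b"
proof -
  have "sum y V = (\<Sum>S\<in>F. xopt S * real (card (S \<inter> V)))" by (rule ysum) simp
  also have "\<dots> \<le> (\<Sum>S\<in>F. xopt S * real b)"
  proof (rule sum_mono)
    fix S assume S: "S \<in> F"
    hence "card (S \<inter> V) \<le> b" unfolding famF_def by (auto simp: Int_absorb2)
    thus "xopt S * real (card (S \<inter> V)) \<le> xopt S * real b" using xnn[OF S] by (simp add: mult_left_mono)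
  qed
  also have "\<dots> = (\<Sum>S\<in>F. xopt S) * real b" by (simp add: sum_distrib_right)
  also have "\<dots> \<le> 1 * real b" by (rule mult_right_mono[OF xsum]) simp
  finally show ?thesis by simp
qed

lemma yg: assumes "t < m" shows "\<alpha> t \<le> sum y (Vg t)" "sum y (Vg t) \<le> \<beta> t"
  using opt_feas assms ysum[OF Vg_sub[OF assms]] unfolding lp_feasible_def by auto

lemma ygcard: assumes "t < m" shows "sum y (Vg t) \<le> real (card (Vg t))"
proof -
  have "sum y (Vg t) = (\<Sum>S\<in>F. xopt S * real (card (S \<inter> Vg t)))" by (rule ysum[OF Vg_sub[OF assms]])
  also have "\<dots> \<le> (\<Sum>S\<in>F. xopt S * real (card (Vg t)))"
  proof (rule sum_mono)
    fix S assume S: "S \<in> F"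
    have "card (S \<inter> Vg t) \<le> card (Vg t)" using finVg[OF assms] by (simp add: card_mono)
    thus "xopt S * real (card (S \<inter> Vg t)) \<le> xopt S * real (card (Vg t))" using xnn[OF S] by (simp add: mult_left_mono)
  qed
  also have "\<dots> = (\<Sum>S\<in>F. xopt S) * real (card (Vg t))" by (simp add: sum_distrib_right)
  also have "\<dots> \<le> 1 * real (card (Vg t))" by (rule mult_right_mono[OF xsum]) simp
  finally show ?thesis by simp
qed

lemma yUN: assumes "T \<subseteq> {..<m}" shows "sum y (\<Union>t\<in>T. Vg t) = (\<Sum>t\<in>T. sum y (Vg t))"
  apply (rule sum.UNION_disjoint)
  using assms finite_subset finVg apply auto[2]
  using assms groups_disj by blast

lemma yVdec: "sum y V = (\<Sum>t<m. sum y (Vg t))"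
  using yUN[of "{..<m}"] groups_cover by simp

lemma carddec: assumes "A \<subseteq> V" shows "card A = (\<Sum>t<m. card (A \<inter> Vg t))"
proof -
  have "A = (\<Union>t<m. A \<inter> Vg t)" using assms groups_cover by auto
  hence "card A = card (\<Union>t<m. A \<inter> Vg t)" by simp
  also have "\<dots> = (\<Sum>t<m. card (A \<inter> Vg t))"
    apply (rule card_UN_disjoint) using finVg groups_disj by auto
  finally show ?thesis .
qed

lemma lu: "t < m \<Longrightarrow> l t \<le> u t"
  using yg[of t] unfolding l_def u_def
  by (smt (verit, ccfv_threshold) ceiling_mono floor_le_ceiling nat_mono)

lemma l_alpha: "t < m \<Longrightarrow> real (l t) \<le> \<alpha> t"
  using alpha_nonneg unfolding l_def by simp

lemma beta_u: assumes "t < m" shows "\<beta> t \<le> real (u t)"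
proof -
  have "0 \<le> \<beta> t" using beta_nonneg assms by auto
  hence "real (nat \<lceil>\<beta> t\<rceil>) = of_int \<lceil>\<beta> t\<rceil>" by simp
  thus ?thesis unfolding u_def using le_of_int_ceiling by simp
qed


lemma I_iff: "A \<in> I \<longleftrightarrow> A \<subseteq> V \<and> (\<forall>t<m. card (A \<inter> Vg t) \<le> u t) \<and> (\<Sum>t<m. max (l t) (card (A \<inter> Vg t))) \<le> b"
  unfolding famI_def l_def u_def by simp

lemma card_ins: assumes "A \<subseteq> V" "e \<in> Vg t" "e \<notin> A" "t < m" "t' < m"
  shows "card (insert e A \<inter> Vg t') = (if t' = t then Suc (card (A \<inter> Vg t')) else card (A \<inter> Vg t'))"
proof (cases "t' = t")
  case True
  have "insert e A \<inter> Vg t' = insert e (A \<inter> Vg t')" using True assms by auto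
  moreover have "finite (A \<inter> Vg t')" using finVg assms by auto
  ultimately show ?thesis using True assms by simp
next
  case False
  have "e \<notin> Vg t'" using groups_disj assms False by blast
  hence "insert e A \<inter> Vg t' = A \<inter> Vg t'" by auto
  thus ?thesis using False by simp
qed

lemma ins_I: assumes A: "A \<in> I" and e: "e \<in> Vg t" "e \<notin> A" and t: "t < m"
  and cu: "card (A \<inter> Vg t) < u t"
  and alt: "card (A \<inter> Vg t) < l t \<or> (\<Sum>t<m. max (l t) (card (A \<inter> Vg t))) < b"
  shows "insert e A \<in> I"
proof -
  have AV: "A \<subseteq> V" using A I_iff by auto
  have eV: "e \<in> V" using e t Vg_sub by auto
  let ?c = "\<lambda>t. card (A \<inter> Vg t)" and ?c' = "\<lambda>t. card (insert e A \<inter> Vg t)"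
  have cc: "\<And>t'. t' < m \<Longrightarrow> ?c' t' = (if t' = t then Suc (?c t') else ?c t')"
    using card_ins[OF AV e t] by blast
  have b1: "\<forall>t'<m. ?c' t' \<le> u t'"
  proof (intro allI impI)
    fix t' assume t': "t' < m"
    show "?c' t' \<le> u t'" using cc[OF t'] cu A I_iff t' by (auto split: if_splits)
  qed
  have tm: "t \<in> {..<m}" using t by simp
  have r1: "(\<Sum>t'<m. max (l t') (?c' t')) = max (l t) (?c' t) + (\<Sum>t'\<in>{..<m}-{t}. max (l t') (?c' t'))"
    using sum.remove[OF _ tm] by simp
  have r2: "(\<Sum>t'<m. max (l t') (?c t')) = max (l t) (?c t) + (\<Sum>t'\<in>{..<m}-{t}. max (l t') (?c t'))"
    using sum.remove[OF _ tm] by simp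
  have r3: "(\<Sum>t'\<in>{..<m}-{t}. max (l t') (?c' t')) = (\<Sum>t'\<in>{..<m}-{t}. max (l t') (?c t'))"
    by (rule sum.cong) (use cc in auto)
  have ct: "?c' t = Suc (?c t)" using cc[OF t] by simp
  have Mb: "(\<Sum>t<m. max (l t) (card (A \<inter> Vg t))) \<le> b" using A I_iff by auto
  have "(\<Sum>t'<m. max (l t') (?c' t')) \<le> b"
    using alt
  proof
    assume "?c t < l t"
    hence "max (l t) (?c' t) = max (l t) (?c t)" using ct by simp
    thus ?thesis using r1 r2 r3 Mb by simp
  next
    assume "(\<Sum>t<m. max (l t) (card (A \<inter> Vg t))) < b"
    moreover have "max (l t) (?c' t) \<le> Suc (max (l t) (?c t))" using ct by simp
    ultimately show ?thesis using r1 r2 r3 by linarith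
  qed
  thus ?thesis using I_iff AV eV b1 by auto
qed

lemma down: assumes "S \<in> I" "T \<subseteq> S" shows "T \<in> I"
proof -
  have SV: "S \<subseteq> V" using assms I_iff by auto
  have fS: "finite S" using SV finV finite_subset by blast
  have cm: "\<And>t. card (T \<inter> Vg t) \<le> card (S \<inter> Vg t)"
    using assms(2) fS by (intro card_mono) auto
  have "(\<Sum>t<m. max (l t) (card (T \<inter> Vg t))) \<le> (\<Sum>t<m. max (l t) (card (S \<inter> Vg t)))"
    by (rule sum_mono) (use cm in \<open>auto intro: max.mono le_trans[OF _ max.cobounded2]\<close>)
  thus ?thesis using assms I_iff cm SV by (meson le_trans order_trans subset_trans)
qed

lemma emp: "{} \<in> I"
proof -
  have "real (\<Sum>t<m. l t) = (\<Sum>t<m. real (l t))" by simp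
  also have "\<dots> \<le> (\<Sum>t<m. sum y (Vg t))"
    by (rule sum_mono) (use l_alpha yg in \<open>force\<close>)
  also have "\<dots> \<le> real b" using yV yVdec by simp
  finally have "(\<Sum>t<m. l t) \<le> b" by linarith
  thus ?thesis using I_iff by simp
qed


lemma blk: assumes A: "A \<in> I" shows "sum y (blocked V I A) \<le> real (card A)"
proof -
  define c where "c t = card (A \<inter> Vg t)" for t
  define M where "M = (\<Sum>t<m. max (l t) (c t))"
  have AV: "A \<subseteq> V" using A I_iff by auto
  have cu: "\<And>t. t < m \<Longrightarrow> c t \<le> u t" using A I_iff unfolding c_def by auto
  have Mb: "M \<le> b" using A I_iff unfolding M_def c_def by auto
  have key: "\<exists>t<m. e \<in> Vg t \<and> (c t = u t \<or> (l t \<le> c t \<and> b \<le> M))" if e: "e \<in> blocked V I A" for e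
  proof -
    have eV: "e \<in> V" "e \<notin> A" "insert e A \<notin> I" using e unfolding blocked_def by auto
    obtain t where t: "t < m" "e \<in> Vg t" using eV(1) groups_cover by auto
    show ?thesis
    proof (rule ccontr)
      assume "\<not> ?thesis"
      hence "c t \<noteq> u t" "c t < l t \<or> M < b" using t by auto
      hence "c t < u t" "c t < l t \<or> M < b" using cu[OF t(1)] by auto
      hence "insert e A \<in> I" by (intro ins_I[OF A t(2) eV(2) t(1)]) (auto simp: c_def M_def)
      thus False using eV by blast
    qed
  qed
  have finB: "finite (blocked V I A)" using finV unfolding blocked_def by auto
  have yUNle: "sum y (blocked V I A) \<le> (\<Sum>t\<in>T. sum y (Vg t))"
    if T: "T \<subseteq> {..<m}" and sub: "blocked V I A \<subseteq> (\<Union>t\<in>T. Vg t)" for T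
  proof -
    have "(\<Union>t\<in>T. Vg t) \<subseteq> V" using T Vg_sub by auto
    hence "finite (\<Union>t\<in>T. Vg t)" using finV finite_subset by blast
    hence "sum y (blocked V I A) \<le> sum y (\<Union>t\<in>T. Vg t)"
      using sub ynn by (intro sum_mono2) auto
    thus ?thesis using yUN[OF T] by simp
  qed
  have cardA: "card A = (\<Sum>t<m. c t)" using carddec[OF AV] unfolding c_def by simp
  show ?thesis
  proof (cases "b \<le> M")
    case True
    define T2 where "T2 = {t. t < m \<and> l t \<le> c t}"
    define R where "R = {..<m} - T2"
    have T2m: "T2 \<subseteq> {..<m}" unfolding T2_def by auto
    have sub: "blocked V I A \<subseteq> (\<Union>t\<in>T2. Vg t)"
    proof
      fix e assume "e \<in> blocked V I A"
      then obtain t where "t < m" "e \<in> Vg t" "c t = u t \<or> (l t \<le> c t \<and> b \<le> M)" using key by blast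
      moreover have "l t \<le> c t" using lu[OF \<open>t < m\<close>] \<open>c t = u t \<or> (l t \<le> c t \<and> b \<le> M)\<close> by auto
      ultimately show "e \<in> (\<Union>t\<in>T2. Vg t)" unfolding T2_def by blast
    qed
    have s1: "sum y V = (\<Sum>t\<in>T2. sum y (Vg t)) + (\<Sum>t\<in>R. sum y (Vg t))"
      unfolding yVdec R_def using sum.subset_diff[OF T2m, of "\<lambda>t. sum y (Vg t)"] by simp
    have s2: "(\<Sum>t\<in>R. real (l t)) \<le> (\<Sum>t\<in>R. sum y (Vg t))"
    proof (rule sum_mono)
      fix t assume "t \<in> R" hence t: "t < m" by (simp add: R_def)
      show "real (l t) \<le> sum y (Vg t)" using l_alpha[OF t] yg(1)[OF t] by linarith
    qed
    have s3: "M = (\<Sum>t\<in>T2. c t) + (\<Sum>t\<in>R. l t)"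
    proof -
      have "M = (\<Sum>t\<in>T2. max (l t) (c t)) + (\<Sum>t\<in>R. max (l t) (c t))"
        unfolding M_def R_def using sum.subset_diff[OF T2m, of "\<lambda>t. max (l t) (c t)"] by simp
      moreover have "(\<Sum>t\<in>T2. max (l t) (c t)) = (\<Sum>t\<in>T2. c t)" by (rule sum.cong) (auto simp: T2_def)
      moreover have "(\<Sum>t\<in>R. max (l t) (c t)) = (\<Sum>t\<in>R. l t)" by (rule sum.cong) (auto simp: T2_def R_def)
      ultimately show ?thesis by simp
    qed
    have s4: "(\<Sum>t\<in>T2. c t) \<le> card A" unfolding cardA using T2m by (intro sum_mono2) auto
    have "real M = (\<Sum>t\<in>T2. real (c t)) + (\<Sum>t\<in>R. real (l t))" using s3 by simp
    moreover have "real b \<le> real M" using True by simp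
    moreover have "real (\<Sum>t\<in>T2. c t) \<le> real (card A)" using s4 by linarith
    ultimately show ?thesis using yUNle[OF T2m sub] s1 s2 yV by simp
  next
    case False
    define T1 where "T1 = {t. t < m \<and> c t = u t}"
    have T1m: "T1 \<subseteq> {..<m}" unfolding T1_def by auto
    have sub: "blocked V I A \<subseteq> (\<Union>t\<in>T1. Vg t)"
    proof
      fix e assume "e \<in> blocked V I A"
      then obtain t where "t < m" "e \<in> Vg t" "c t = u t \<or> (l t \<le> c t \<and> b \<le> M)" using key by blast
      thus "e \<in> (\<Union>t\<in>T1. Vg t)" unfolding T1_def using False by blast
    qed
    have "(\<Sum>t\<in>T1. sum y (Vg t)) \<le> (\<Sum>t\<in>T1. real (c t))"
    proof (rule sum_mono)
      fix t assume "t \<in> T1" hence t: "t < m" "c t = u t" by (auto simp: T1_def)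
      show "sum y (Vg t) \<le> real (c t)" using beta_u[OF t(1)] yg(2)[OF t(1)] t(2) by linarith
    qed
    also have "\<dots> = real (\<Sum>t\<in>T1. c t)" by simp
    also have "\<dots> \<le> real (card A)" unfolding cardA using T1m by (intro of_nat_mono sum_mono2) auto
    finally show ?thesis using yUNle[OF T1m sub] by simp
  qed
qed


lemma fmono: "A \<subseteq> B \<Longrightarrow> B \<subseteq> V \<Longrightarrow> f A \<le> f B"
  using f_mono unfolding monotone_set_fun_def by blast

lemma dr: assumes "S \<subseteq> T" "T \<subseteq> V" "e \<in> V"
  shows "f (insert e T) - f T \<le> f (insert e S) - f S"
proof (cases "e \<in> T")
  case True
  hence "insert e T = T" by auto
  moreover have "f S \<le> f (insert e S)" using fmono[of S "insert e S"] assms by auto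
  ultimately show ?thesis by simp
next
  case False
  have "insert e S \<union> T = insert e T" using assms by auto
  moreover have "insert e S \<inter> T = S" using assms False by auto
  moreover have "insert e S \<subseteq> V" using assms by auto
  ultimately have "f (insert e T) + f S \<le> f (insert e S) + f T"
    using f_submod assms unfolding submodular_def by metis
  thus ?thesis by linarith
qed

lemma main: assumes greedy: "greedy_output V I f Ag"
  shows "card Ag \<le> b \<and>
    (\<forall>t<m. real_of_int \<lfloor>\<alpha> t\<rfloor> \<le> real (card (Ag \<inter> Vg t)) \<and>
               real (card (Ag \<inter> Vg t)) \<le> real_of_int \<lceil>\<beta> t\<rceil>) \<and>
    f Ag \<ge> (1 - 1 / exp 1)^2 / 2 * lp_obj V b f xopt"
proof -
  have reach: "greedy_reach V I f Ag" and maxl: "\<not> (\<exists>e\<in>V - Ag. insert e Ag \<in> I)"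
    using greedy unfolding greedy_output_def by auto
  have G: "Ag \<in> I \<and> Ag \<subseteq> V \<and> (\<forall>h. 0 \<le> h \<longrightarrow> (h \<le> 0 \<or> (\<exists>e\<in>V-Ag. insert e Ag \<in> I \<and> h \<le> f (insert e Ag) - f Ag)) \<longrightarrow>
     (\<Sum>e\<in>blocked V I Ag. y e * (f (insert e Ag) - f Ag)) + (real (card Ag) - sum y (blocked V I Ag)) * h \<le> f Ag - f {})"
    by (rule greedy_inv[OF finV down emp fmono dr ynn blk reach]) auto
  have AgI: "Ag \<in> I" and AgV: "Ag \<subseteq> V" using G by auto
  have bnd: "(\<Sum>e\<in>blocked V I Ag. y e * (f (insert e Ag) - f Ag)) \<le> f Ag - f {}"
    using G by auto
  have finAg: "finite Ag" using AgV finV finite_subset by blast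
  have c1: "card Ag \<le> b"
  proof -
    have "card Ag = (\<Sum>t<m. card (Ag \<inter> Vg t))" by (rule carddec[OF AgV])
    also have "\<dots> \<le> (\<Sum>t<m. max (l t) (card (Ag \<inter> Vg t)))" by (rule sum_mono) simp
    also have "\<dots> \<le> b" using AgI I_iff by auto
    finally show ?thesis .
  qed
  have c2: "\<forall>t<m. real_of_int \<lfloor>\<alpha> t\<rfloor> \<le> real (card (Ag \<inter> Vg t)) \<and>
               real (card (Ag \<inter> Vg t)) \<le> real_of_int \<lceil>\<beta> t\<rceil>"
  proof (intro allI impI conjI)
    fix t assume t: "t < m"
    have lr: "real_of_int \<lfloor>\<alpha> t\<rfloor> = real (l t)" using alpha_nonneg t unfolding l_def by simp
    have ur: "real_of_int \<lceil>\<beta> t\<rceil> = real (u t)" using beta_nonneg t unfolding u_def by simp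
    have cu: "card (Ag \<inter> Vg t) \<le> u t" using AgI I_iff t by auto
    thus "real (card (Ag \<inter> Vg t)) \<le> real_of_int \<lceil>\<beta> t\<rceil>" using ur by simp
    show "real_of_int \<lfloor>\<alpha> t\<rfloor> \<le> real (card (Ag \<inter> Vg t))"
    proof (rule ccontr)
      assume "\<not> ?thesis"
      hence lt: "card (Ag \<inter> Vg t) < l t" using lr by simp
      have "real (l t) \<le> real (card (Vg t))" using l_alpha[OF t] yg(1)[OF t] ygcard[OF t] by linarith
      hence "card (Ag \<inter> Vg t) < card (Vg t)" using lt by simp
      hence "\<not> Vg t \<subseteq> Ag" by (metis Int_absorb1 Int_commute less_irrefl)
      then obtain e where e: "e \<in> Vg t" "e \<notin> Ag" by blast
      have "insert e Ag \<in> I"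
        using ins_I[OF AgI e t] lt lu[OF t] by simp
      moreover have "e \<in> V" using e Vg_sub t by auto
      ultimately show False using maxl e by blast
    qed
  qed
  define D where "D e = f (insert e Ag) - f Ag" for e
  have subS: "f (S \<union> Ag) \<le> f Ag + (\<Sum>e\<in>S. D e)" if "S \<subseteq> V" for S
  proof -
    have "finite S" using that finV finite_subset by blast
    thus ?thesis using that
    proof (induction S rule: finite_induct)
      case empty thus ?case by simp
    next
      case (insert e S)
      have "f (insert e (S \<union> Ag)) - f (S \<union> Ag) \<le> f (insert e Ag) - f Ag"
        using dr[of Ag "S \<union> Ag" e] insert AgV by auto
      thus ?case using insert by (simp add: D_def)
    qed
  qed
  have fS: "f S \<le> f Ag + (\<Sum>e\<in>S. D e)" if "S \<subseteq> V" for S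
  proof -
    have "f S \<le> f (S \<union> Ag)" using fmono[of S "S \<union> Ag"] that AgV by blast
    thus ?thesis using subS[OF that] by linarith
  qed
  have fnn: "\<And>S. S \<subseteq> V \<Longrightarrow> 0 \<le> f S" using f_nonneg by auto
  have lp: "lp_obj V b f xopt = (\<Sum>S\<in>F. xopt S * f S)" unfolding lp_obj_def by simp
  have "(\<Sum>S\<in>F. xopt S * f S) \<le> (\<Sum>S\<in>F. xopt S * (f Ag + (\<Sum>e\<in>S. D e)))"
  proof (rule sum_mono)
    fix S assume S: "S \<in> F"
    hence "S \<subseteq> V" unfolding famF_def by blast
    thus "xopt S * f S \<le> xopt S * (f Ag + (\<Sum>e\<in>S. D e))"
      using fS xnn[OF S] by (intro mult_left_mono) auto
  qed
  also have "\<dots> = (\<Sum>S\<in>F. xopt S) * f Ag + (\<Sum>S\<in>F. xopt S * (\<Sum>e\<in>S. D e))"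
    by (simp add: algebra_simps sum.distrib sum_distrib_right sum_distrib_left)
  also have "(\<Sum>S\<in>F. xopt S * (\<Sum>e\<in>S. D e)) = (\<Sum>e\<in>V. y e * D e)"
  proof -
    have "(\<Sum>S\<in>F. xopt S * (\<Sum>e\<in>S. D e)) = (\<Sum>S\<in>F. \<Sum>e\<in>V. xopt S * (if e \<in> S then 1 else 0) * D e)"
    proof (rule sum.cong)
      fix S assume "S \<in> F"
      hence SV: "S \<subseteq> V" unfolding famF_def by auto
      have "(\<Sum>e\<in>S. D e) = (\<Sum>e\<in>V. if e \<in> S then D e else 0)"
        using sum.inter_restrict[OF finV, of D S] SV by (simp add: Int_absorb1)
      thus "xopt S * (\<Sum>e\<in>S. D e) = (\<Sum>e\<in>V. xopt S * (if e \<in> S then 1 else 0) * D e)"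
        by (simp add: sum_distrib_left if_distrib cong: if_cong) (rule sum.cong; simp)
    qed simp
    also have "\<dots> = (\<Sum>e\<in>V. \<Sum>S\<in>F. xopt S * (if e \<in> S then 1 else 0) * D e)" by (rule sum.swap)
    also have "\<dots> = (\<Sum>e\<in>V. y e * D e)" unfolding y_def by (simp add: sum_distrib_right)
    finally show ?thesis .
  qed
  also have "(\<Sum>e\<in>V. y e * D e) = (\<Sum>e\<in>blocked V I Ag. y e * D e)"
  proof (rule sum.mono_neutral_right[OF finV])
    show "blocked V I Ag \<subseteq> V" unfolding blocked_def by auto
    show "\<forall>e\<in>V - blocked V I Ag. y e * D e = 0"
    proof
      fix e assume e: "e \<in> V - blocked V I Ag"
      hence "e \<in> Ag" using maxl unfolding blocked_def by auto
      thus "y e * D e = 0" unfolding D_def by (simp add: insert_absorb)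
    qed
  qed
  finally have "(\<Sum>S\<in>F. xopt S * f S) \<le> (\<Sum>S\<in>F. xopt S) * f Ag + (f Ag - f {})"
    using bnd unfolding D_def by linarith
  moreover have "(\<Sum>S\<in>F. xopt S) * f Ag \<le> 1 * f Ag"
    by (rule mult_right_mono[OF xsum]) (use fnn AgV in auto)
  moreover have "0 \<le> f {}" using fnn by auto
  ultimately have opt2: "lp_obj V b f xopt \<le> 2 * f Ag" unfolding lp by linarith
  have opt0: "0 \<le> lp_obj V b f xopt" unfolding lp
  proof (rule sum_nonneg)
    fix S assume S: "S \<in> F"
    hence "S \<subseteq> V" unfolding famF_def by blast
    thus "0 \<le> xopt S * f S" using fnn xnn[OF S] by simp
  qed
  have e1: "1 \<le> exp (1::real)" by simp
  have "0 \<le> 1 - 1 / exp (1::real)" "1 - 1 / exp (1::real) \<le> 1" using e1 by auto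
  hence cst: "(1 - 1 / exp (1::real))^2 \<le> 1" by (simp add: power_le_one)
  have "(1 - 1 / exp 1)^2 / 2 * lp_obj V b f xopt \<le> 1 / 2 * lp_obj V b f xopt"
    using cst opt0 by (intro mult_right_mono) auto
  also have "\<dots> \<le> f Ag" using opt2 by simp
  finally show ?thesis using c1 c2 by simp
qed

end

theorem theorem2:
  fixes V :: "'a set" and f :: "'a set \<Rightarrow> real" and m :: nat and Vg :: "nat \<Rightarrow> 'a set"
    and \<alpha> \<beta> :: "nat \<Rightarrow> real" and b :: nat and xopt :: "'a set \<Rightarrow> real" and Ag :: "'a set"
  assumes finV: "finite V"
    and f_nonneg: "\<forall>S\<subseteq>V. 0 \<le> f S"
    and f_mono: "monotone_set_fun V f"
    and f_submod: "submodular V f"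
    and groups_disj: "\<forall>s<m. \<forall>t<m. s \<noteq> t \<longrightarrow> Vg s \<inter> Vg t = {}"
    and groups_cover: "(\<Union>t<m. Vg t) = V"
    and alpha_nonneg: "\<forall>t<m. 0 \<le> \<alpha> t"
    and beta_nonneg: "\<forall>t<m. 0 \<le> \<beta> t"
    and b_pos: "0 < b"
    and opt_feas: "lp_feasible V m Vg \<alpha> \<beta> b xopt"
    and opt_max: "\<forall>x. lp_feasible V m Vg \<alpha> \<beta> b x \<longrightarrow> lp_obj V b f x \<le> lp_obj V b f xopt"
    and greedy: "greedy_output V (famI V m Vg \<alpha> \<beta> b) f Ag"
  shows "card Ag \<le> b \<and>
    (\<forall>t<m. real_of_int \<lfloor>\<alpha> t\<rfloor> \<le> real (card (Ag \<inter> Vg t)) \<and>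
               real (card (Ag \<inter> Vg t)) \<le> real_of_int \<lceil>\<beta> t\<rceil>) \<and>
    f Ag \<ge> (1 - 1 / exp 1)^2 / 2 * lp_obj V b f xopt"
proof -
  have L: "gsetup V f m Vg \<alpha> \<beta> b xopt"
    unfolding gsetup_def using finV f_nonneg f_mono f_submod groups_disj groups_cover alpha_nonneg beta_nonneg opt_feas
    by blast
  show ?thesis using gsetup.main[OF L greedy] .
qed

end
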